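(* Under the hypotheses of the preceding setting (f proper lsc with the K\L{} property at $x^*$ with desingularizing $\varphi$ on $\Gamma_\eta(x^*,\delta)$; $(x^k)$ satisfying $\mathbf{H}_1$, $\mathbf{H}_2$, $\mathbf{H}_3$ and $\mathbf{S}(x^*,\delta,\rho)$), we have $x^k\in\underline{\Gamma}_\eta(x^*,\rho)$ for all $k$, and $(x^k)$ converges strongly to some $\bar x$ in the closed ball $\overline{B(x^*,\rho)}$. Moreover $\sum_{k=1}^\infty\|x^{k+1}-x^k\|<\infty$, $\liminf_{k\to\infty}\|\partial f(x^k)\|_-=0$, and $f(\bar x)\le\lim_{k\to\infty}f(x^k)=f(x^* )$.
   Context: $\partial f$ limiting Fréchet subdifferential, lazy slope $\|\partial f(x)\|_-=\inf_{p\in\partial f(x)}\|p\|$ ($+\infty$ if empty). K\L{} inequality on $\Gamma_\eta(x^*,\delta)=\{x:\|x-x^*\|<\delta,\ f(x^* )<f(x)<f(x^* )+\eta\}$: $\varphi'(f(x)-f(x^* ))\|\partial f(x)\|_-\ge1$, $\varphi$ continuous concave on $[0,\eta[$, $\varphi(0)=0$, $C^1$ with $\varphi'>0$ on $]0,\eta[$. $\underline{\Gamma}_\eta(x^*,r)=\{x:\|x-x^*\|<r,\ f(x^* )\le f(x)<f(x^* )+\eta\}$; $\Gamma_\eta(x^*,r)$ likewise with $f(x^* )<f(x)$. $\mathbf{H}_1$: $f(x^{k+1})+a_k\|x^{k+1}-x^k\|^2\le f(x^k)$, $a_k>0$. $\mathbf{H}_2$: $b_{k+1}\|\partial f(x^{k+1})\|_-\le\|x^{k+1}-x^k\|+\varepsilon_{k+1}$,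 $b_{k+1}>0$, $\varepsilon_{k+1}\ge0$. $\mathbf{H}_3$: (i) $a_k\ge\underline a>0$; (ii) $(b_k)\notin\ell^1$; (iii) $M:=\sup_{k\ge1}\frac1{a_kb_k}<\infty$; (iv) $(\varepsilon_k)\in\ell^1$. $\mathbf{S}(x^*,\delta,\rho)$: $\delta>\rho>0$ and (i) for each $k$, if $x^0,\dots,x^k\in\underline{\Gamma}_\eta(x^*,\rho)$ then $x^{k+1}\in\underline{\Gamma}_\eta(x^*,\delta)$; (ii) $x^0\in\Gamma_\eta(x^*,\rho)$ and $\|x^*-x^0\|+2\sqrt{\frac{f(x^0)-f(x^* )}{a_0}}+M\varphi(f(x^0)-f(x^* ))+\sum_{i=1}^\infty\varepsilon_i<\rho$. *)

theory Defs
  imports "HOL-Analysis.Analysis"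
begin

definition proper_fun :: "('a \<Rightarrow> ereal) \<Rightarrow> bool" where
  "proper_fun f \<longleftrightarrow> (\<forall>x. f x \<noteq> -\<infinity>) \<and> (\<exists>x. f x \<noteq> \<infinity>)"

definition lsc_fun :: "('a::topological_space \<Rightarrow> ereal) \<Rightarrow> bool" where
  "lsc_fun f \<longleftrightarrow> (\<forall>x xs. xs \<longlonglongrightarrow> x \<longrightarrow> f x \<le> liminf (\<lambda>n. f (xs n)))"

definition weak_conv :: "(nat \<Rightarrow> 'a::real_inner) \<Rightarrow> 'a \<Rightarrow> bool" where
  "weak_conv ps p \<longleftrightarrow> (\<forall>y. (\<lambda>n. inner (ps n) y) \<longlonglongrightarrow> inner p y)"

text \<open>Frechet subdifferential: p such that
  liminf_{y->x, y<>x} (f y - f x - <p, y - x>) / norm (y - x) >= 0, at points where f x is finite.\<close>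
definition frechet_subdiff :: "('a::real_inner \<Rightarrow> ereal) \<Rightarrow> 'a \<Rightarrow> 'a set" where
  "frechet_subdiff f x = {p. \<bar>f x\<bar> \<noteq> \<infinity> \<and>
     (\<forall>e>0. \<exists>d>0. \<forall>y. norm (y - x) < d \<longrightarrow>
        f x + ereal (inner p (y - x) - e * norm (y - x)) \<le> f y)}"

definition limiting_subdiff :: "('a::real_inner \<Rightarrow> ereal) \<Rightarrow> 'a \<Rightarrow> 'a set" where
  "limiting_subdiff f x = {p. \<exists>xs ps. xs \<longlonglongrightarrow> x \<and> (\<lambda>n. f (xs n)) \<longlonglongrightarrow> f x \<and>
     (\<forall>n. ps n \<in> frechet_subdiff f (xs n)) \<and> weak_conv ps p}"

text \<open>Lazy slope: inf of norms over the limiting subdifferential (+\<infinity> if empty).\<close>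
definition lazy_slope :: "('a::real_inner \<Rightarrow> ereal) \<Rightarrow> 'a \<Rightarrow> ereal" where
  "lazy_slope f x = (INF p\<in>limiting_subdiff f x. ereal (norm p))"

definition Gamma :: "('a::real_normed_vector \<Rightarrow> ereal) \<Rightarrow> ereal \<Rightarrow> 'a \<Rightarrow> real \<Rightarrow> 'a set" where
  "Gamma f \<eta> xs r = {x. norm (x - xs) < r \<and> f xs < f x \<and> f x < f xs + \<eta>}"

definition Gamma_low :: "('a::real_normed_vector \<Rightarrow> ereal) \<Rightarrow> ereal \<Rightarrow> 'a \<Rightarrow> real \<Rightarrow> 'a set" where
  "Gamma_low f \<eta> xs r = {x. norm (x - xs) < r \<and> f xs \<le> f x \<and> f x < f xs + \<eta>}"

definition desing :: "ereal \<Rightarrow> (real \<Rightarrow> real) \<Rightarrow> (real \<Rightarrow> real) \<Rightarrow> bool" where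
  "desing \<eta> \<phi> \<phi>' \<longleftrightarrow>
     continuous_on {s. 0 \<le> s \<and> ereal s < \<eta>} \<phi> \<and>
     concave_on {s. 0 \<le> s \<and> ereal s < \<eta>} \<phi> \<and> \<phi> 0 = 0 \<and>
     (\<forall>s. 0 < s \<and> ereal s < \<eta> \<longrightarrow> (\<phi> has_real_derivative \<phi>' s) (at s) \<and> \<phi>' s > 0) \<and>
     continuous_on {s. 0 < s \<and> ereal s < \<eta>} \<phi>'"

definition KL_at :: "('a::real_inner \<Rightarrow> ereal) \<Rightarrow> 'a \<Rightarrow> ereal \<Rightarrow> real \<Rightarrow> (real \<Rightarrow> real) \<Rightarrow> (real \<Rightarrow> real) \<Rightarrow> bool" where
  "KL_at f xs \<eta> \<delta> \<phi> \<phi>' \<longleftrightarrow> desing \<eta> \<phi> \<phi>' \<and>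
     (\<forall>x\<in>Gamma f \<eta> xs \<delta>. ereal (\<phi>' (real_of_ereal (f x - f xs))) * lazy_slope f x \<ge> 1)"

end

theory Submission imports Defs begin


lemma desing_tangent:
  assumes D: "desing \<eta> \<phi> \<phi>'" and t: "0 < t" "ereal t < \<eta>" and s: "0 \<le> s" "ereal s < \<eta>"
  shows "\<phi> s \<le> \<phi> t + \<phi>' t * (s - t)"
proof -
  let ?A = "{s. 0 \<le> s \<and> ereal s < \<eta>}"
  have cv: "convex_on ?A (\<lambda>x. - \<phi> x)" using D unfolding desing_def concave_on_def by auto
  have "is_interval ?A" unfolding is_interval_1
    by (auto intro: le_less_trans[rotated])
  then have con: "connected ?A" by (simp add: is_interval_connected_1)
  have op: "open {s. 0 < s \<and> ereal s < \<eta>}"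
  proof -
    have "open {s::real. ereal s < \<eta>}"
      by (intro open_Collect_less continuous_on_ereal continuous_on_id continuous_on_const)
    moreover have "open {s::real. 0 < s}" by (simp add: open_Collect_less)
    ultimately show ?thesis using open_Int by (simp add: Collect_conj_eq)
  qed
  have "{s. 0 < s \<and> ereal s < \<eta>} \<subseteq> interior ?A"
    by (rule interior_maximal[OF _ op]) auto
  then have ti: "t \<in> interior ?A" using t by blast
  have dv: "((\<lambda>x. - \<phi> x) has_field_derivative - \<phi>' t) (at t within ?A)"
  proof -
    have "(\<phi> has_real_derivative \<phi>' t) (at t)" using D t unfolding desing_def by blast
    then show ?thesis by (rule has_field_derivative_at_within[OF DERIV_minus])
  qed
  have sA: "s \<in> ?A" using s by simp
  have "- \<phi> s - (- \<phi> t) \<ge> - \<phi>' t * (s - t)"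
    by (rule convex_on_imp_above_tangent[OF cv con ti sA dv])
  then show ?thesis by (simp add: algebra_simps)
qed


lemma GL_fin:
  assumes "y \<in> Gamma_low f \<eta> xs r" "f xs = ereal c"
  shows "f y = ereal (real_of_ereal (f y))" "c \<le> real_of_ereal (f y)"
    "ereal (real_of_ereal (f y) - c) < \<eta>" "norm (y - xs) < r"
  using assms unfolding Gamma_low_def
  by (cases "f y"; cases \<eta>; auto)+

lemma G_sub: "Gamma f \<eta> xs r \<subseteq> Gamma_low f \<eta> xs r"
  unfolding Gamma_def Gamma_low_def by auto

lemma lazy_nonneg: "lazy_slope f y \<ge> 0"
  unfolding lazy_slope_def by (rule INF_greatest) simp

lemma step_real:
  fixes r1 r2 a b M dk dp e :: real and s :: ereal
  assumes D: "desing \<eta> \<phi> \<phi>'"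
    and r1: "0 \<le> r1" "ereal r1 < \<eta>" and r2: "0 \<le> r2" "ereal r2 < \<eta>"
    and ab: "a > 0" "b > 0" and M: "1 / (a * b) \<le> M"
    and nn: "dk \<ge> 0" "dp \<ge> 0" "e \<ge> 0"
    and H1: "r2 + a * dk\<^sup>2 \<le> r1"
    and KL: "r1 > 0 \<Longrightarrow> ereal (\<phi>' r1) * s \<ge> 1"
    and H2: "ereal b * s \<le> ereal (dp + e)"
    and s0: "s \<ge> 0"
  shows "2 * dk \<le> M * (\<phi> r1 - \<phi> r2) + dp + e"
proof (cases "r1 = 0")
  case True
  have "a * dk\<^sup>2 \<ge> 0" using ab by simp
  then have "r2 = 0" "a * dk\<^sup>2 = 0" using H1 r2 True by linarith+
  then have "dk = 0" using ab by simp
  then show ?thesis using \<open>r2 = 0\<close> True nn by simp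
next
  case False
  then have r1p: "r1 > 0" using r1 by simp
  have M0: "M > 0" using M ab by (smt (verit) divide_pos_pos mult_pos_pos)
  have p1: "\<phi>' r1 > 0" using D r1p r1 unfolding desing_def by blast
  obtain \<sigma> where s\<sigma>: "s = ereal \<sigma>"
    using H2 s0 ab by (cases s) auto
  have kl: "\<phi>' r1 * \<sigma> \<ge> 1" using KL[OF r1p] s\<sigma> by simp
  have h2: "b * \<sigma> \<le> dp + e" using H2 s\<sigma> by simp
  have tg: "\<phi> r2 \<le> \<phi> r1 + \<phi>' r1 * (r2 - r1)"
    by (rule desing_tangent[OF D r1p r1(2) r2])
  define \<Delta> where "\<Delta> = \<phi> r1 - \<phi> r2"
  have "\<Delta> \<ge> \<phi>' r1 * (r1 - r2)" using tg unfolding \<Delta>_def by (simp add: algebra_simps)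
  moreover have "r1 - r2 \<ge> a * dk\<^sup>2" using H1 by simp
  ultimately have A: "\<Delta> \<ge> \<phi>' r1 * (a * dk\<^sup>2)"
    using p1 by (smt (verit) mult_left_mono)
  have ad0: "a * dk\<^sup>2 \<ge> 0" using ab by simp
  have \<Delta>0: "\<Delta> \<ge> 0" using A p1 ad0 by (smt (verit) mult_nonneg_nonneg)
  have "\<Delta> * \<sigma> \<ge> \<phi>' r1 * \<sigma> * (a * dk\<^sup>2)"
  proof -
    have \<sigma>0: "\<sigma> \<ge> 0" using s0 s\<sigma> by simp
    have "\<Delta> * \<sigma> \<ge> \<phi>' r1 * (a * dk\<^sup>2) * \<sigma>" using A \<sigma>0 by (rule mult_right_mono)
    then show ?thesis by (simp add: algebra_simps)
  qed
  moreover have "\<phi>' r1 * \<sigma> * (a * dk\<^sup>2) \<ge> a * dk\<^sup>2"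
    using kl ad0 by (metis mult_le_cancel_right2 mult.commute mult_right_mono mult_1)
  ultimately have B: "a * dk\<^sup>2 \<le> \<Delta> * \<sigma>" by linarith
  have "a * b * dk\<^sup>2 \<le> \<Delta> * (b * \<sigma>)"
    using mult_left_mono[OF B, of b] ab by (simp add: algebra_simps)
  also have "\<dots> \<le> \<Delta> * (dp + e)" using h2 \<Delta>0 by (rule mult_left_mono)
  finally have C: "a * b * dk\<^sup>2 \<le> \<Delta> * (dp + e)" .
  have "dk\<^sup>2 \<le> \<Delta> * (dp + e) / (a * b)"
    using C ab by (simp add: field_simps)
  also have "\<dots> = (1 / (a * b)) * (\<Delta> * (dp + e))" by simp
  also have "\<dots> \<le> M * (\<Delta> * (dp + e))"
    using M \<Delta>0 nn by (intro mult_right_mono) auto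
  finally have E: "dk\<^sup>2 \<le> (M * \<Delta>) * (dp + e)" by (simp add: algebra_simps)
  have "(2 * dk)\<^sup>2 \<le> (M * \<Delta> + (dp + e))\<^sup>2"
  proof -
    have "(2 * dk)\<^sup>2 = 4 * dk\<^sup>2" by (simp add: power2_eq_square)
    also have "\<dots> \<le> 4 * ((M * \<Delta>) * (dp + e))" using E by simp
    also have "\<dots> \<le> (M * \<Delta> + (dp + e))\<^sup>2"
    proof -
      have "(M * \<Delta> + (dp + e))\<^sup>2 - 4 * ((M * \<Delta>) * (dp + e)) = (M * \<Delta> - (dp + e))\<^sup>2"
        by (simp add: power2_eq_square algebra_simps)
      moreover have "(M * \<Delta> - (dp + e))\<^sup>2 \<ge> 0" by simp
      ultimately show ?thesis by linarith
    qed
    finally show ?thesis .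
  qed
  then have "2 * dk \<le> M * \<Delta> + (dp + e)"
  proof (rule power2_le_imp_le)
    have "M * \<Delta> \<ge> 0" using M0 \<Delta>0 by simp
    then show "0 \<le> M * \<Delta> + (dp + e)" using nn by linarith
  qed
  then show ?thesis unfolding \<Delta>_def by simp
qed


lemma phi_nonneg:
  assumes D: "desing \<eta> \<phi> \<phi>'" and r: "0 \<le> r" "ereal r < \<eta>"
  shows "\<phi> r \<ge> 0"
proof (cases "r = 0")
  case True then show ?thesis using D unfolding desing_def by simp
next
  case False
  then have rp: "r > 0" using r by simp
  have "ereal 0 \<le> ereal r" using r by simp
  then have z: "ereal 0 < \<eta>" using r(2) by (rule le_less_trans)
  have z0: "(0::real) \<le> 0" by simp
  have 1: "\<phi> 0 \<le> \<phi> r + \<phi>' r * (0 - r)"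
    by (rule desing_tangent[OF D rp r(2) z0 z])
  have 2: "\<phi>' r > 0" using D rp r unfolding desing_def by blast
  have 3: "\<phi> 0 = 0" using D unfolding desing_def by simp
  have "\<phi>' r * r > 0" using 2 rp by simp
  then show ?thesis using 1 3 by (simp add: algebra_simps)
qed

lemma phi_mono:
  assumes D: "desing \<eta> \<phi> \<phi>'" and r: "0 \<le> s" "s \<le> t" "ereal t < \<eta>" "0 < t"
  shows "\<phi> s \<le> \<phi> t"
proof -
  have "ereal s \<le> ereal t" using r by simp
  then have s: "ereal s < \<eta>" using r(3) by (rule le_less_trans)
  have 1: "\<phi> s \<le> \<phi> t + \<phi>' t * (s - t)"
    by (rule desing_tangent[OF D r(4) r(3) r(1) s])
  have "\<phi>' t > 0" using D r unfolding desing_def by blast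
  then have "\<phi>' t * (t - s) \<ge> 0" using r by simp
  then show ?thesis using 1 by (simp add: algebra_simps)
qed

lemma phi'_antimono:
  assumes D: "desing \<eta> \<phi> \<phi>'" and r: "0 < s" "s \<le> t" "ereal t < \<eta>"
  shows "\<phi>' t \<le> \<phi>' s"
proof -
  have "ereal s \<le> ereal t" using r by simp
  then have s: "ereal s < \<eta>" using r(3) by (rule le_less_trans)
  have t0: "0 < t" using r by simp
  have s0: "0 \<le> s" "0 \<le> t" using r by auto
  have 1: "\<phi> s \<le> \<phi> t + \<phi>' t * (s - t)"
    by (rule desing_tangent[OF D t0 r(3) s0(1) s])
  have 2: "\<phi> t \<le> \<phi> s + \<phi>' s * (t - s)"
    by (rule desing_tangent[OF D r(1) s s0(2) r(3)])
  have 3: "(\<phi>' s - \<phi>' t) * (t - s) \<ge> 0" using 1 2 by (simp add: algebra_simps)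
  show ?thesis
  proof (cases "s = t")
    case True then show ?thesis by simp
  next
    case False
    then have "t - s > 0" using r by simp
    then show ?thesis using 3 by (simp add: zero_le_mult_iff)
  qed
qed

lemma norm_path:
  fixes x :: "nat \<Rightarrow> 'a::real_normed_vector"
  shows "norm (x n - y) \<le> norm (x 0 - y) + (\<Sum>k<n. norm (x (Suc k) - x k))"
proof (induction n)
  case 0 then show ?case by simp
next
  case (Suc n)
  have "norm (x (Suc n) - y) \<le> norm (x (Suc n) - x n) + norm (x n - y)"
    using norm_triangle_ineq[of "x (Suc n) - x n" "x n - y"] by simp
  moreover have "(\<Sum>k<Suc n. norm (x (Suc k) - x k)) = (\<Sum>k<n. norm (x (Suc k) - x k)) + norm (x (Suc n) - x n)"
    by (rule sum.lessThan_Suc)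
  ultimately show ?case using Suc by linarith
qed


theorem mainTheorem9:
  fixes f :: "'a::{real_inner, complete_space} \<Rightarrow> ereal"
    and xs :: 'a and \<eta> :: ereal and \<delta> \<rho> :: real
    and \<phi> \<phi>' :: "real \<Rightarrow> real"
    and x :: "nat \<Rightarrow> 'a" and a b \<epsilon> :: "nat \<Rightarrow> real" and a_low :: real
  assumes proper: "proper_fun f" and lsc: "lsc_fun f"
    and eta_pos: "\<eta> > 0"
    and KL: "KL_at f xs \<eta> \<delta> \<phi> \<phi>'"
    and H1: "\<forall>k. a k > 0 \<and> f (x (Suc k)) + ereal (a k * (norm (x (Suc k) - x k))\<^sup>2) \<le> f (x k)"
    and H2: "\<forall>k. b (Suc k) > 0 \<and> \<epsilon> (Suc k) \<ge> 0 \<and>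
               ereal (b (Suc k)) * lazy_slope f (x (Suc k)) \<le> ereal (norm (x (Suc k) - x k) + \<epsilon> (Suc k))"
    and H3i: "a_low > 0" "\<forall>k. a k \<ge> a_low"
    and H3ii: "\<not> summable (\<lambda>k. b (Suc k))"
    and H3iii: "bdd_above {1 / (a k * b k) | k. k \<ge> 1}"
    and H3iv: "summable (\<lambda>k. \<epsilon> (Suc k))"
    and S0: "\<delta> > \<rho>" "\<rho> > 0"
    and Si: "\<forall>k. (\<forall>i\<le>k. x i \<in> Gamma_low f \<eta> xs \<rho>) \<longrightarrow> x (Suc k) \<in> Gamma_low f \<eta> xs \<delta>"
    and Sii: "x 0 \<in> Gamma f \<eta> xs \<rho>"
      "norm (xs - x 0) + 2 * sqrt (real_of_ereal (f (x 0) - f xs) / a 0)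
         + (SUP k\<in>{1..}. 1 / (a k * b k)) * \<phi> (real_of_ereal (f (x 0) - f xs))
         + (\<Sum>i. \<epsilon> (Suc i)) < \<rho>"
  shows "(\<forall>k. x k \<in> Gamma_low f \<eta> xs \<rho>) \<and>
         (\<exists>xbar. x \<longlonglongrightarrow> xbar \<and> norm (xbar - xs) \<le> \<rho> \<and>
            summable (\<lambda>k. norm (x (Suc k) - x k)) \<and>
            liminf (\<lambda>k. lazy_slope f (x k)) = 0 \<and>
            (\<lambda>k. f (x k)) \<longlonglongrightarrow> f xs \<and> f xbar \<le> f xs)"
proof -
  have D: "desing \<eta> \<phi> \<phi>'" using KL unfolding KL_at_def by blast
  have fx0: "f xs < f (x 0)" using Sii(1) unfolding Gamma_def by blast
  obtain fs where fs: "f xs = ereal fs"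
    using fx0 proper unfolding proper_fun_def by (cases "f xs") auto
  define F where "F k = real_of_ereal (f (x k))" for k
  define r where "r k = F k - fs" for k
  define d where "d k = norm (x (Suc k) - x k)" for k
  define M where "M = (SUP k\<in>{1..}. 1 / (a k * b k))"
  define E where "E = (\<Sum>i. \<epsilon> (Suc i))"
  have d0: "d k \<ge> 0" for k unfolding d_def by simp
  have apos: "a k > 0" for k using H1 by blast
  have bpos: "b (Suc k) > 0" for k using H2 by blast
  have epos: "\<epsilon> (Suc k) \<ge> 0" for k using H2 by blast
  have bdd: "bdd_above ((\<lambda>k. 1 / (a k * b k)) ` {1..})"
  proof -
    have "(\<lambda>k. 1 / (a k * b k)) ` {1..} = {1 / (a k * b k) | k. k \<ge> 1}" by auto
    then show ?thesis using H3iii by simp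
  qed
  have Mk: "1 / (a k * b k) \<le> M" if "k \<ge> 1" for k
    unfolding M_def using that bdd by (intro cSUP_upper) auto
  have M0: "M \<ge> 0"
  proof -
    have p: "1 / (a (Suc 0) * b (Suc 0)) > 0" using apos[of "Suc 0"] bpos[of 0] by simp
    have q: "1 / (a (Suc 0) * b (Suc 0)) \<le> M" by (rule Mk) simp
    from p q show ?thesis by linarith
  qed
  have E0: "E \<ge> 0" unfolding E_def using H3iv epos by (intro suminf_nonneg) auto
  have EK: "(\<Sum>k<K. \<epsilon> (Suc k)) \<le> E" for K
    unfolding E_def using H3iv epos by (intro sum_le_suminf) auto
  have GLmono: "y \<in> Gamma_low f \<eta> xs \<rho> \<Longrightarrow> y \<in> Gamma_low f \<eta> xs \<delta>" for y
    using S0 unfolding Gamma_low_def by auto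
  have GLk: "f (x k) = ereal (F k) \<and> 0 \<le> r k \<and> ereal (r k) < \<eta> \<and> norm (x k - xs) < r'"
    if "x k \<in> Gamma_low f \<eta> xs r'" for k r'
  proof -
    note g = GL_fin[OF that fs]
    have 1: "f (x k) = ereal (F k)" using g(1) unfolding F_def .
    have 2: "0 \<le> r k" using g(2) unfolding r_def F_def by simp
    have 3: "ereal (r k) < \<eta>" using g(3) unfolding r_def F_def .
    show ?thesis using 1 2 3 g(4) by blast
  qed
  have H1r: "r (Suc k) + a k * (d k)\<^sup>2 \<le> r k"
    if "x k \<in> Gamma_low f \<eta> xs \<delta>" "x (Suc k) \<in> Gamma_low f \<eta> xs \<delta>" for k
  proof -
    have e1: "f (x k) = ereal (F k)" using GLk[OF that(1)] by blast
    have e2: "f (x (Suc k)) = ereal (F (Suc k))" using GLk[OF that(2)] by blast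
    have "f (x (Suc k)) + ereal (a k * (d k)\<^sup>2) \<le> f (x k)" using H1 unfolding d_def by blast
    then have "F (Suc k) + a k * (d k)\<^sup>2 \<le> F k" unfolding e1 e2 by simp
    then show ?thesis unfolding r_def by simp
  qed
  have x0GL: "x 0 \<in> Gamma_low f \<eta> xs \<rho>" using Sii(1) G_sub by blast
  have x1GL: "x 1 \<in> Gamma_low f \<eta> xs \<delta>" using Si x0GL by auto
  have f0: "f (x 0) = ereal (F 0)" using GLk[OF x0GL] by blast
  have r0pos: "r 0 > 0" using fx0 unfolding f0 fs r_def by simp
  have r0eta: "ereal (r 0) < \<eta>" using GLk[OF x0GL] by blast
  have Sii': "norm (xs - x 0) + 2 * sqrt (r 0 / a 0) + M * \<phi> (r 0) + E < \<rho>"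
  proof -
    have "real_of_ereal (f (x 0) - f xs) = r 0" unfolding f0 fs r_def by simp
    then show ?thesis using Sii(2) unfolding M_def E_def by simp
  qed
  have r1: "0 \<le> r 1" "ereal (r 1) < \<eta>" using GLk[OF x1GL] by auto
  have H10: "r 1 + a 0 * (d 0)\<^sup>2 \<le> r 0" using H1r[of 0] GLmono[OF x0GL] x1GL by simp
  have d0b: "d 0 \<le> sqrt (r 0 / a 0)"
  proof (rule real_le_rsqrt)
    have "a 0 * (d 0)\<^sup>2 \<le> r 0" using H10 r1 by linarith
    then show "(d 0)\<^sup>2 \<le> r 0 / a 0" using apos[of 0] by (simp add: field_simps)
  qed
  have phi10: "\<phi> (r 1) \<le> \<phi> (r 0)"
  proof (rule phi_mono[OF D r1(1) _ r0eta r0pos])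
    have "a 0 * (d 0)\<^sup>2 \<ge> 0" using apos[of 0] by simp
    then show "r 1 \<le> r 0" using H10 by linarith
  qed
  define B where "B = M * \<phi> (r 0) + d 0 + E"
  have bnd_imp: "(\<Sum>k<K. d (Suc k)) \<le> B"
    if h: "(\<Sum>k<K. d (Suc k)) + d K \<le> M * (\<phi> (r 1) - \<phi> (r (Suc K))) + d 0 + (\<Sum>k<K. \<epsilon> (Suc k))"
      and xg: "x (Suc K) \<in> Gamma_low f \<eta> xs \<delta>" for K
  proof -
    have "\<phi> (r (Suc K)) \<ge> 0" using GLk[OF xg] phi_nonneg[OF D] by blast
    then have "\<phi> (r 1) - \<phi> (r (Suc K)) \<le> \<phi> (r 0)" using phi10 by linarith
    then have "M * (\<phi> (r 1) - \<phi> (r (Suc K))) \<le> M * \<phi> (r 0)" using M0 by (rule mult_left_mono)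
    then show ?thesis using h EK[of K] d0[of K] unfolding B_def by linarith
  qed
  have normb: "norm (x (Suc K) - xs) < \<rho>" if "(\<Sum>k<K. d (Suc k)) \<le> B" for K
  proof -
    have "norm (x (Suc K) - xs) \<le> norm (x 0 - xs) + (\<Sum>k<Suc K. d k)"
      using norm_path[of x "Suc K" xs] unfolding d_def .
    also have "(\<Sum>k<Suc K. d k) = d 0 + (\<Sum>k<K. d (Suc k))" by (rule sum.lessThan_Suc_shift)
    finally have "norm (x (Suc K) - xs) \<le> norm (xs - x 0) + 2 * d 0 + M * \<phi> (r 0) + E"
      using that unfolding B_def by (simp add: norm_minus_commute)
    then show ?thesis using Sii' d0b by linarith
  qed
  have claim: "(\<forall>i\<le>K. x i \<in> Gamma_low f \<eta> xs \<rho>) \<and>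
     (\<Sum>k<K. d (Suc k)) + d K \<le> M * (\<phi> (r 1) - \<phi> (r (Suc K))) + d 0 + (\<Sum>k<K. \<epsilon> (Suc k))" for K
  proof (induction K)
    case 0
    then show ?case using x0GL by simp
  next
    case (Suc K)
    have allK: "\<forall>i\<le>K. x i \<in> Gamma_low f \<eta> xs \<rho>" using Suc.IH by blast
    have xK1d: "x (Suc K) \<in> Gamma_low f \<eta> xs \<delta>" using Si allK by blast
    have "(\<Sum>k<K. d (Suc k)) \<le> B" using bnd_imp Suc.IH xK1d by blast
    then have "norm (x (Suc K) - xs) < \<rho>" by (rule normb)
    then have xK1: "x (Suc K) \<in> Gamma_low f \<eta> xs \<rho>" using xK1d unfolding Gamma_low_def by auto
    have allK1: "\<forall>i\<le>Suc K. x i \<in> Gamma_low f \<eta> xs \<rho>" using allK xK1 le_Suc_eq by auto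
    have xK2d: "x (Suc (Suc K)) \<in> Gamma_low f \<eta> xs \<delta>" using Si allK1 by blast
    have g1: "f (x (Suc K)) = ereal (F (Suc K))" "0 \<le> r (Suc K)" "ereal (r (Suc K)) < \<eta>"
      "norm (x (Suc K) - xs) < \<rho>" using GLk[OF xK1] by auto
    have g2: "0 \<le> r (Suc (Suc K))" "ereal (r (Suc (Suc K))) < \<eta>" using GLk[OF xK2d] by auto
    have step: "2 * d (Suc K) \<le> M * (\<phi> (r (Suc K)) - \<phi> (r (Suc (Suc K)))) + d K + \<epsilon> (Suc K)"
    proof (rule step_real[OF D g1(2,3) g2 apos bpos Mk d0 d0 epos])
      show "Suc K \<ge> 1" by simp
      show "r (Suc (Suc K)) + a (Suc K) * (d (Suc K))\<^sup>2 \<le> r (Suc K)"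
        by (rule H1r[OF xK1d xK2d])
      show "ereal (b (Suc K)) * lazy_slope f (x (Suc K)) \<le> ereal (d K + \<epsilon> (Suc K))"
        using H2 unfolding d_def by blast
      show "lazy_slope f (x (Suc K)) \<ge> 0" by (rule lazy_nonneg)
      assume rp: "0 < r (Suc K)"
      have inG: "x (Suc K) \<in> Gamma f \<eta> xs \<delta>"
        using xK1d rp g1(1) fs S0 g1(4) unfolding Gamma_def Gamma_low_def r_def by auto
      have "real_of_ereal (f (x (Suc K)) - f xs) = r (Suc K)" unfolding g1(1) fs r_def by simp
      then show "1 \<le> ereal (\<phi>' (r (Suc K))) * lazy_slope f (x (Suc K))"
        using KL inG unfolding KL_at_def by metis
    qed
    show ?case
    proof (intro conjI allK1)
      have s1: "(\<Sum>k<Suc K. d (Suc k)) = (\<Sum>k<K. d (Suc k)) + d (Suc K)" by (rule sum.lessThan_Suc)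
      have s2: "(\<Sum>k<Suc K. \<epsilon> (Suc k)) = (\<Sum>k<K. \<epsilon> (Suc k)) + \<epsilon> (Suc K)" by (rule sum.lessThan_Suc)
      show "(\<Sum>k<Suc K. d (Suc k)) + d (Suc K) \<le> M * (\<phi> (r 1) - \<phi> (r (Suc (Suc K)))) + d 0 + (\<Sum>k<Suc K. \<epsilon> (Suc k))"
        using Suc.IH step unfolding s1 s2 by (simp add: algebra_simps)
    qed
  qed
  have allGL: "\<forall>k. x k \<in> Gamma_low f \<eta> xs \<rho>" using claim by blast
  have sumB: "(\<Sum>k<K. d (Suc k)) \<le> B" for K
  proof (rule bnd_imp)
    show "(\<Sum>k<K. d (Suc k)) + d K \<le> M * (\<phi> (r 1) - \<phi> (r (Suc K))) + d 0 + (\<Sum>k<K. \<epsilon> (Suc k))"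
      using claim by blast
    show "x (Suc K) \<in> Gamma_low f \<eta> xs \<delta>" using allGL GLmono by blast
  qed
  have B0: "B \<ge> 0"
  proof -
    have "\<phi> (r 0) \<ge> 0" using phi_nonneg[OF D _ r0eta] r0pos by simp
    then have "M * \<phi> (r 0) \<ge> 0" using M0 by simp
    then show ?thesis unfolding B_def using d0[of 0] E0 by linarith
  qed
  have summ: "summable d"
  proof (rule summableI_nonneg_bounded[where x = "d 0 + B"])
    show "0 \<le> d n" for n by (rule d0)
    show "(\<Sum>i<n. d i) \<le> d 0 + B" for n
    proof (cases n)
      case 0 then show ?thesis using d0[of 0] B0 by simp
    next
      case (Suc m) then show ?thesis using sum.lessThan_Suc_shift[of d m] sumB[of m] by simp
    qed
  qed
  have summ': "summable (\<lambda>k. norm (x (Suc k) - x k))" using summ unfolding d_def[abs_def] .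
  have tel: "norm (x n - x m) \<le> (\<Sum>i=m..<n. d i)" if "m \<le> n" for m n
  proof -
    have "x n - x m = (\<Sum>i=m..<n. x (Suc i) - x i)" using sum_Suc_diff'[OF that, of x] by simp
    then have "norm (x n - x m) \<le> (\<Sum>i=m..<n. norm (x (Suc i) - x i))"
      using norm_sum[of "\<lambda>i. x (Suc i) - x i" "{m..<n}"] by simp
    then show ?thesis unfolding d_def .
  qed
  have "Cauchy x"
  proof (rule CauchyI)
    fix e :: real assume "0 < e"
    then obtain N where N: "\<forall>m\<ge>N. \<forall>n. norm (sum d {m..<n}) < e"
      using summ unfolding summable_Cauchy by blast
    have "norm (x m - x n) < e" if "m \<ge> N" "n \<ge> N" for m n
    proof (cases "m \<le> n")
      case True
      have "norm (x m - x n) = norm (x n - x m)" by (rule norm_minus_commute)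
      also have "\<dots> \<le> (\<Sum>i=m..<n. d i)" by (rule tel[OF True])
      also have "\<dots> \<le> norm (sum d {m..<n})" by simp
      also have "\<dots> < e" using N that by blast
      finally show ?thesis .
    next
      case False
      have "norm (x m - x n) \<le> (\<Sum>i=n..<m. d i)" using False by (intro tel) simp
      also have "\<dots> \<le> norm (sum d {n..<m})" by simp
      also have "\<dots> < e" using N that by blast
      finally show ?thesis .
    qed
    then show "\<exists>M. \<forall>m\<ge>M. \<forall>n\<ge>M. norm (x m - x n) < e" by blast
  qed
  then have "convergent x" by (rule Cauchy_convergent)
  then have xc: "x \<longlonglongrightarrow> lim x" by (rule convergent_LIMSEQ_iff[THEN iffD1])
  define xbar where "xbar = lim x"
  have nb: "norm (xbar - xs) \<le> \<rho>"
  proof (rule LIMSEQ_le_const2)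
    show "(\<lambda>n. norm (x n - xs)) \<longlonglongrightarrow> norm (xbar - xs)"
      unfolding xbar_def by (intro tendsto_intros xc)
    show "\<exists>N. \<forall>n\<ge>N. norm (x n - xs) \<le> \<rho>"
      using GLk allGL by (meson less_imp_le)
  qed
  have lim0: "liminf (\<lambda>k. lazy_slope f (x k)) = 0"
  proof (rule antisym)
    show "liminf (\<lambda>k. lazy_slope f (x k)) \<le> 0"
    proof (rule ccontr)
      assume "\<not> liminf (\<lambda>k. lazy_slope f (x k)) \<le> 0"
      then have "0 < liminf (\<lambda>k. lazy_slope f (x k))" by simp
      then obtain c where c: "0 < ereal c" "ereal c < liminf (\<lambda>k. lazy_slope f (x k))"
        using ereal_dense2 by blast
      have "eventually (\<lambda>k. ereal c < lazy_slope f (x k)) sequentially"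
        using less_LiminfD[OF c(2)] .
      then obtain N where N: "\<forall>k\<ge>N. ereal c < lazy_slope f (x k)"
        by (auto simp: eventually_sequentially)
      have c0: "c > 0" using c by simp
      have "summable (\<lambda>k. b (Suc k))"
      proof (rule summable_comparison_test_ev)
        show "summable (\<lambda>k. (d k + \<epsilon> (Suc k)) / c)" using summ H3iv
          by (intro summable_divide summable_add) auto
        show "eventually (\<lambda>k. norm (b (Suc k)) \<le> (d k + \<epsilon> (Suc k)) / c) sequentially"
          unfolding eventually_sequentially
        proof (intro exI allI impI)
          fix k assume "N \<le> k"
          then have cs: "ereal c < lazy_slope f (x (Suc k))" using N by simp
          have h2: "ereal (b (Suc k)) * lazy_slope f (x (Suc k)) \<le> ereal (d k + \<epsilon> (Suc k))"
            using H2 unfolding d_def by blast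
          have "ereal (b (Suc k)) * ereal c \<le> ereal (b (Suc k)) * lazy_slope f (x (Suc k))"
            using cs bpos[of k] by (intro ereal_mult_left_mono) auto
          then have "ereal (b (Suc k) * c) \<le> ereal (b (Suc k)) * lazy_slope f (x (Suc k))" by simp
          then have "ereal (b (Suc k) * c) \<le> ereal (d k + \<epsilon> (Suc k))" using h2 by (rule order_trans)
          then have "b (Suc k) * c \<le> d k + \<epsilon> (Suc k)" by simp
          then show "norm (b (Suc k)) \<le> (d k + \<epsilon> (Suc k)) / c"
            using c0 bpos[of k] by (simp add: field_simps)
        qed
      qed
      then show False using H3ii by simp
    qed
    show "0 \<le> liminf (\<lambda>k. lazy_slope f (x k))"
      by (rule Liminf_bounded) (simp add: lazy_nonneg)
  qed
  have Fdec: "decseq F"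
  proof (rule decseq_SucI)
    fix k
    have "r (Suc k) + a k * (d k)\<^sup>2 \<le> r k" using H1r allGL GLmono by blast
    moreover have "a k * (d k)\<^sup>2 \<ge> 0" using apos[of k] by simp
    ultimately show "F (Suc k) \<le> F k" unfolding r_def by linarith
  qed
  have Fb: "\<forall>i. fs \<le> F i" using GLk allGL unfolding r_def by fastforce
  obtain L where L: "F \<longlonglongrightarrow> L" "\<forall>i. L \<le> F i" using decseq_convergent[OF Fdec Fb] by blast
  have Lfs: "L = fs"
  proof (rule ccontr)
    assume "L \<noteq> fs"
    moreover have "fs \<le> L" using L(1) Fb by (intro LIMSEQ_le_const) auto
    ultimately have q: "L - fs > 0" by simp
    have "L - fs \<le> r 0" using L(2) unfolding r_def by auto
    then have "ereal (L - fs) \<le> ereal (r 0)" by simp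
    then have qeta: "ereal (L - fs) < \<eta>" using r0eta by (rule le_less_trans)
    have pq: "\<phi>' (L - fs) > 0" using D q qeta unfolding desing_def by blast
    define c where "c = 1 / \<phi>' (L - fs)"
    have c0: "c > 0" unfolding c_def using pq by simp
    have cle: "ereal c \<le> lazy_slope f (x k)" for k
    proof -
      have g: "f (x k) = ereal (F k)" "0 \<le> r k" "ereal (r k) < \<eta>" "norm (x k - xs) < \<rho>"
        using GLk allGL by auto
      have rk: "L - fs \<le> r k" using L(2) unfolding r_def by auto
      have xk: "x k \<in> Gamma_low f \<eta> xs \<rho>" using allGL by blast
      have inG: "x k \<in> Gamma f \<eta> xs \<delta>"
        using xk rk q g(1) g(4) fs S0 unfolding Gamma_def Gamma_low_def r_def by auto
      have "real_of_ereal (f (x k) - f xs) = r k" unfolding g(1) fs r_def by simp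
      then have kl: "1 \<le> ereal (\<phi>' (r k)) * lazy_slope f (x k)"
        using KL inG unfolding KL_at_def by metis
      have "\<phi>' (r k) \<le> \<phi>' (L - fs)" by (rule phi'_antimono[OF D q rk g(3)])
      then have "ereal (\<phi>' (r k)) * lazy_slope f (x k) \<le> ereal (\<phi>' (L - fs)) * lazy_slope f (x k)"
        using lazy_nonneg by (intro ereal_mult_right_mono) auto
      with kl have kl2: "1 \<le> ereal (\<phi>' (L - fs)) * lazy_slope f (x k)" by (rule order_trans)
      show ?thesis
      proof (cases "lazy_slope f (x k)")
        case (real \<sigma>)
        then have "1 \<le> \<phi>' (L - fs) * \<sigma>" using kl2 by simp
        then have "c \<le> \<sigma>" unfolding c_def using pq by (simp add: field_simps)
        then show ?thesis using real by simp
      next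
        case PInf then show ?thesis by simp
      next
        case MInf then show ?thesis using lazy_nonneg[of f "x k"] by simp
      qed
    qed
    have "ereal c \<le> liminf (\<lambda>k. lazy_slope f (x k))"
      by (rule Liminf_bounded) (simp add: cle)
    then show False using lim0 c0 by simp
  qed
  have fe: "(\<lambda>k. f (x k)) = (\<lambda>k. ereal (F k))" using GLk allGL by fastforce
  have flim: "(\<lambda>k. f (x k)) \<longlonglongrightarrow> f xs" unfolding fe fs using L(1) Lfs by simp
  have "f xbar \<le> liminf (\<lambda>n. f (x n))" using lsc xc unfolding lsc_fun_def xbar_def by blast
  also have "liminf (\<lambda>n. f (x n)) = f xs" by (rule lim_imp_Liminf[OF trivial_limit_sequentially flim])
  finally have fb: "f xbar \<le> f xs" .
  show ?thesis
    using allGL xc nb summ' lim0 flim fb unfolding xbar_def by blast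
qed

end
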